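(* Let $E$ be a Hermite–Biehler entire function with no real zeros whose phase function satisfies $\varphi'\in L^\infty(\mathbb{R})$, and let $0<p<\infty$. Suppose there exists $C>0$ such that $\lVert f/E\rVert_\infty\le C\lVert f/E\rVert_p$ for all real entire functions $f\in\mathcal{H}^p(E)$. Then $C(p,E)\le C$.
   Context: An entire function $E$ is Hermite–Biehler if $\lvert E(\overline{z})\rvert < \lvert E(z)\rvert$ for $z$ in the upper half-plane $\mathbb{C}_+$. For an entire $g$, $g^{\#}(z)=\overline{g(\overline z)}$; $g$ is real entire if real on $\mathbb{R}$. The phase function $\varphi$ is a smooth real function on $\mathbb{R}$ with $E^{\#}(x)/E(x)=e^{i\varphi(x)}$. For $0<p<\infty$, $\mathcal{H}^p(E)$ is the space of entire $f$ with $f/E, f^{\#}/E$ in the Hardy space $H^p(\mathbb{C}_+)$, $\lVert f/E\rVert_p=(\int_{\mathbb{R}}\lvert f/E\rvert^p dx)^{1/p}$; $\mathcal{H}^\infty(E)$ is defined with bounded analytic functions and $\lVert f/E\rVert_\infty=\sup_{\mathbb{R}}\lvert f/E\rvert$. When $\varphi'\in L^\infty$, $\mathcal{H}^p(E)\subset\mathcal{H}^\infty(E)$ and $C(p,E)$ is the norm of this embedding. *)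

theory Defs
  imports "HOL-Analysis.Analysis"
begin

definition upper_half_plane :: "complex set" where
  "upper_half_plane = {z. Im z > 0}"

definition sharp :: "(complex \<Rightarrow> complex) \<Rightarrow> complex \<Rightarrow> complex" where
  "sharp g = (\<lambda>z. cnj (g (cnj z)))"

definition entire :: "(complex \<Rightarrow> complex) \<Rightarrow> bool" where
  "entire f \<longleftrightarrow> f holomorphic_on UNIV"

definition real_entire :: "(complex \<Rightarrow> complex) \<Rightarrow> bool" where
  "real_entire f \<longleftrightarrow> entire f \<and> (\<forall>x::real. f (complex_of_real x) \<in> \<real>)"

definition hermite_biehler :: "(complex \<Rightarrow> complex) \<Rightarrow> bool" where
  "hermite_biehler E \<longleftrightarrow> entire E \<and>
     (\<forall>z. Im z > 0 \<longrightarrow> norm (E (cnj z)) < norm (E z))"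

definition hardy :: "real \<Rightarrow> (complex \<Rightarrow> complex) \<Rightarrow> bool" where
  "hardy p g \<longleftrightarrow> g holomorphic_on upper_half_plane \<and>
     (SUP y\<in>{0<..}. \<integral>\<^sup>+ x. ennreal (norm (g (Complex x y)) powr p) \<partial>lborel) < \<infinity>"

definition hardy_inf :: "(complex \<Rightarrow> complex) \<Rightarrow> bool" where
  "hardy_inf g \<longleftrightarrow> g holomorphic_on upper_half_plane \<and> bounded (g ` upper_half_plane)"

definition HpE :: "real \<Rightarrow> (complex \<Rightarrow> complex) \<Rightarrow> (complex \<Rightarrow> complex) set" where
  "HpE p E = {f. entire f \<and> hardy p (\<lambda>z. f z / E z) \<and> hardy p (\<lambda>z. sharp f z / E z)}"

definition HinfE :: "(complex \<Rightarrow> complex) \<Rightarrow> (complex \<Rightarrow> complex) set" where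
  "HinfE E = {f. entire f \<and> hardy_inf (\<lambda>z. f z / E z) \<and> hardy_inf (\<lambda>z. sharp f z / E z)}"

definition Lp_normE :: "real \<Rightarrow> (complex \<Rightarrow> complex) \<Rightarrow> (complex \<Rightarrow> complex) \<Rightarrow> ereal" where
  "Lp_normE p E f =
     (let I = \<integral>\<^sup>+ x. ennreal (norm (f (complex_of_real x) / E (complex_of_real x)) powr p) \<partial>lborel
      in if I = \<infinity> then \<infinity> else ereal (enn2real I powr (1 / p)))"

definition sup_normE :: "(complex \<Rightarrow> complex) \<Rightarrow> (complex \<Rightarrow> complex) \<Rightarrow> ereal" where
  "sup_normE E f = (SUP x::real. ereal (norm (f (complex_of_real x) / E (complex_of_real x))))"

definition phase_deriv_bounded :: "(complex \<Rightarrow> complex) \<Rightarrow> bool" where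
  "phase_deriv_bounded E \<longleftrightarrow>
     (\<exists>\<phi> \<phi>' :: real \<Rightarrow> real. \<exists>B.
        (\<forall>x. sharp E (complex_of_real x) / E (complex_of_real x) = exp (\<i> * complex_of_real (\<phi> x))) \<and>
        (\<forall>x. (\<phi> has_real_derivative \<phi>' x) (at x)) \<and>
        continuous_on UNIV \<phi>' \<and>
        (\<forall>x. \<bar>\<phi>' x\<bar> \<le> B))"

text \<open>C(p,E): the norm of the embedding H^p(E) into H^infinity(E), i.e. the
  supremum of ||f/E||_infinity / ||f/E||_p over nonzero f in H^p(E).\<close>
definition embedding_const :: "real \<Rightarrow> (complex \<Rightarrow> complex) \<Rightarrow> ereal" where
  "embedding_const p E =
     (SUP f\<in>{f \<in> HpE p E. f \<noteq> (\<lambda>_. 0)}. sup_normE E f / Lp_normE p E f)"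

end

theory Submission
  imports Defs
begin

lemma sharp_entire:
  assumes "entire f" shows "entire (sharp f)"
proof -
  have "(sharp f) field_differentiable at z" for z
  proof -
    have "f field_differentiable at (cnj z)" using assms
      by (simp add: entire_def holomorphic_on_def)
    then obtain d where d: "(f has_field_derivative d) (at (cnj z))"
      by (auto simp: field_differentiable_def)
    then have L: "((\<lambda>y. (f y - f (cnj z)) / (y - cnj z)) \<longlongrightarrow> d) (at (cnj z))"
      by (simp add: has_field_derivative_iff)
    have F: "filterlim cnj (at (cnj z)) (at z)"
    proof -
      have "(cnj \<longlongrightarrow> cnj z) (at z)"
        by (intro tendsto_intros)
      moreover have "\<forall>\<^sub>F w in at z. cnj w \<noteq> cnj z"
        by (auto simp: eventually_at_filter)
      ultimately show ?thesis by (simp add: filterlim_at)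
    qed
    have "((\<lambda>w. cnj ((f (cnj w) - f (cnj z)) / (cnj w - cnj z))) \<longlongrightarrow> cnj d) (at z)"
      by (rule tendsto_cnj, rule filterlim_compose[OF L F])
    then have "((\<lambda>w. (sharp f w - sharp f z) / (w - z)) \<longlongrightarrow> cnj d) (at z)"
      by (simp add: sharp_def)
    then show ?thesis
      by (auto simp: field_differentiable_def has_field_derivative_iff)
  qed
  then show ?thesis by (simp add: entire_def holomorphic_on_def field_differentiable_at_within)
qed

lemma slice_meas:
  assumes "F holomorphic_on upper_half_plane" "0 < y"
  shows "(\<lambda>x. ennreal (norm (F (Complex x y)) powr p)) \<in> borel_measurable lborel"
proof -
  have c1: "continuous_on UNIV (\<lambda>x. Complex x y)"
    by (simp add: Complex_eq continuous_intros)
  have "continuous_on UNIV (\<lambda>x. F (Complex x y))"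
    by (rule continuous_on_compose2[OF holomorphic_on_imp_continuous_on[OF assms(1)] c1])
       (auto simp: upper_half_plane_def assms(2))
  then have "(\<lambda>x. F (Complex x y)) \<in> borel_measurable borel"
    by (rule borel_measurable_continuous_onI)
  then have "(\<lambda>x. F (Complex x y)) \<in> borel_measurable lborel"
    by simp
  then show ?thesis by measurable
qed

lemma hardy_comb:
  assumes "hardy p F" "hardy p G" "0 < p" "norm a + norm b \<le> 1"
  shows "hardy p (\<lambda>z. a * F z + b * G z)"
proof -
  have hF: "F holomorphic_on upper_half_plane" and hG: "G holomorphic_on upper_half_plane"
    using assms by (auto simp: hardy_def)
  define IF where "IF y = (\<integral>\<^sup>+ x. ennreal (norm (F (Complex x y)) powr p) \<partial>lborel)" for y
  define IG where "IG y = (\<integral>\<^sup>+ x. ennreal (norm (G (Complex x y)) powr p) \<partial>lborel)" for y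
  have fF: "(SUP y\<in>{0<..}. IF y) < \<infinity>" and fG: "(SUP y\<in>{0<..}. IG y) < \<infinity>"
    using assms by (auto simp: hardy_def IF_def IG_def)
  have pt: "norm (a * u + b * v) powr p \<le> norm u powr p + norm v powr p" for u v :: complex
  proof -
    have "norm (a * u + b * v) \<le> norm a * norm u + norm b * norm v"
      by (metis norm_mult norm_triangle_ineq)
    also have "\<dots> \<le> norm a * max (norm u) (norm v) + norm b * max (norm u) (norm v)"
      by (intro add_mono mult_left_mono) auto
    also have "\<dots> = (norm a + norm b) * max (norm u) (norm v)"
      by (simp add: distrib_right)
    also have "\<dots> \<le> max (norm u) (norm v)"
      using assms(4) by (intro mult_left_le_one_le) (auto simp: le_max_iff_disj)
    finally have "norm (a * u + b * v) powr p \<le> max (norm u) (norm v) powr p"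
      using assms(3) by (intro powr_mono2) auto
    also have "\<dots> \<le> norm u powr p + norm v powr p"
      by (cases "norm u \<le> norm v") (auto simp: max_def)
    finally show ?thesis .
  qed
  have "(\<integral>\<^sup>+ x. ennreal (norm (a * F (Complex x y) + b * G (Complex x y)) powr p) \<partial>lborel) \<le> IF y + IG y"
    if y: "y \<in> {0<..}" for y
  proof -
    have "(\<integral>\<^sup>+ x. ennreal (norm (a * F (Complex x y) + b * G (Complex x y)) powr p) \<partial>lborel)
       \<le> (\<integral>\<^sup>+ x. (ennreal (norm (F (Complex x y)) powr p) + ennreal (norm (G (Complex x y)) powr p)) \<partial>lborel)"
      by (intro nn_integral_mono) (simp add: pt flip: ennreal_plus)
    also have "\<dots> = IF y + IG y"
      unfolding IF_def IG_def
      by (rule nn_integral_add) (use y slice_meas[OF hF] slice_meas[OF hG] in auto)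
    finally show ?thesis .
  qed
  then have "(SUP y\<in>{0<..}. \<integral>\<^sup>+ x. ennreal (norm (a * F (Complex x y) + b * G (Complex x y)) powr p) \<partial>lborel)
     \<le> (SUP y\<in>{0<..}. IF y) + (SUP y\<in>{0<..}. IG y)"
    by (intro SUP_least order.trans[OF _ add_mono[OF SUP_upper SUP_upper]]) auto
  also have "\<dots> < \<infinity>" using fF fG by (simp add: ennreal_add_less_top)
  finally show ?thesis
    using hF hG by (auto simp: hardy_def intro!: holomorphic_intros)
qed

lemma Lp_mono:
  assumes "\<And>x::real. norm (g (complex_of_real x) / E (complex_of_real x)) \<le> norm (f (complex_of_real x) / E (complex_of_real x))"
    and "0 < p"
  shows "Lp_normE p E g \<le> Lp_normE p E f"
proof -
  define Ig where "Ig = (\<integral>\<^sup>+ x. ennreal (norm (g (complex_of_real x) / E (complex_of_real x)) powr p) \<partial>lborel)"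
  define If where "If = (\<integral>\<^sup>+ x. ennreal (norm (f (complex_of_real x) / E (complex_of_real x)) powr p) \<partial>lborel)"
  have le: "Ig \<le> If" unfolding Ig_def If_def
    using assms by (intro nn_integral_mono ennreal_leI powr_mono2) auto
  show ?thesis
  proof (cases "If = \<infinity>")
    case True then show ?thesis by (simp add: Lp_normE_def If_def[symmetric] Ig_def[symmetric])
  next
    case False
    then have "Ig \<noteq> \<infinity>" using le by (auto simp: top_unique)
    moreover have "enn2real Ig \<le> enn2real If" using le False by (simp add: enn2real_mono top.not_eq_extremum)
    ultimately show ?thesis using False assms(2)
      by (simp add: Lp_normE_def If_def[symmetric] Ig_def[symmetric] powr_mono2)
  qed
qed

lemma pointwise_bound:
  assumes "f \<in> HpE p E" "0 < p" "0 < C"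
    and H: "\<forall>f. real_entire f \<and> f \<in> HpE p E \<longrightarrow> sup_normE E f \<le> ereal C * Lp_normE p E f"
  shows "ereal (norm (f (complex_of_real x0) / E (complex_of_real x0))) \<le> ereal C * Lp_normE p E f"
proof -
  define w where "w = f (complex_of_real x0)"
  define \<alpha> where "\<alpha> = (if w = 0 then 1 else cnj w / complex_of_real (norm w))"
  have na: "norm \<alpha> = 1" by (auto simp: \<alpha>_def norm_divide)
  have aw: "\<alpha> * w = complex_of_real (norm w)"
  proof (cases "w = 0")
    case False
    have "cnj w * w = complex_of_real (norm w) ^ 2"
      using complex_norm_square[of w] by (simp add: mult.commute)
    then show ?thesis using False by (simp add: \<alpha>_def power2_eq_square)
  qed (simp add: \<alpha>_def)
  define g where "g = (\<lambda>z. (\<alpha>/2) * f z + (cnj \<alpha>/2) * sharp f z)"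
  have ef: "entire f" and hf: "hardy p (\<lambda>z. f z / E z)" and hs: "hardy p (\<lambda>z. sharp f z / E z)"
    using assms(1) by (auto simp: HpE_def)
  have eg: "entire g" unfolding g_def using ef sharp_entire[OF ef]
    by (auto simp: entire_def intro!: holomorphic_intros)
  have greal: "g (complex_of_real x) = complex_of_real (Re (\<alpha> * f (complex_of_real x)))" for x
  proof -
    have "g (complex_of_real x) = ((\<alpha> * f (complex_of_real x)) + cnj (\<alpha> * f (complex_of_real x))) / 2"
      by (simp add: g_def sharp_def add_divide_distrib)
    also have "\<dots> = complex_of_real (Re (\<alpha> * f (complex_of_real x)))"
      by (subst complex_add_cnj) simp
    finally show ?thesis .
  qed
  have re: "real_entire g" using eg greal by (auto simp: real_entire_def)
  have sg: "sharp g = g"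
    by (rule ext) (simp add: g_def sharp_def add.commute)
  have geq: "(\<lambda>z. g z / E z) = (\<lambda>z. (\<alpha>/2) * (f z / E z) + (cnj \<alpha>/2) * (sharp f z / E z))"
    by (rule ext) (simp add: g_def add_divide_distrib)
  have hg: "hardy p (\<lambda>z. g z / E z)"
    unfolding geq by (rule hardy_comb[OF hf hs assms(2)]) (simp add: na norm_divide)
  have gH: "g \<in> HpE p E" using eg hg sg by (simp add: HpE_def)
  have "ereal (norm (f (complex_of_real x0) / E (complex_of_real x0))) = ereal (norm (g (complex_of_real x0) / E (complex_of_real x0)))"
    using aw by (simp add: greal norm_divide w_def[symmetric])
  also have "\<dots> \<le> sup_normE E g" unfolding sup_normE_def by (rule SUP_upper) auto
  also have "\<dots> \<le> ereal C * Lp_normE p E g" using H re gH by blast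
  also have "\<dots> \<le> ereal C * Lp_normE p E f"
  proof (rule ereal_mult_left_mono)
    show "Lp_normE p E g \<le> Lp_normE p E f"
    proof (rule Lp_mono[OF _ assms(2)])
      fix x :: real
      have "\<bar>Re (\<alpha> * f (complex_of_real x))\<bar> \<le> norm (\<alpha> * f (complex_of_real x))" by (rule abs_Re_le_cmod)
      also have "\<dots> = norm (f (complex_of_real x))" by (simp add: norm_mult na)
      finally show "norm (g (complex_of_real x) / E (complex_of_real x)) \<le> norm (f (complex_of_real x) / E (complex_of_real x))"
        unfolding greal norm_divide norm_of_real by (rule divide_right_mono) auto
    qed
  qed (use assms(3) in auto)
  finally show ?thesis .
qed


theorem lemma5:
  fixes E :: "complex \<Rightarrow> complex" and p C :: real
  assumes "hermite_biehler E"
    and "\<forall>x::real. E (complex_of_real x) \<noteq> 0"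
    and "phase_deriv_bounded E"
    and "0 < p"
    and "0 < C"
    and "\<forall>f. real_entire f \<and> f \<in> HpE p E \<longrightarrow> sup_normE E f \<le> ereal C * Lp_normE p E f"
  shows "embedding_const p E \<le> ereal C"
  unfolding embedding_const_def
proof (rule SUP_least)
  fix f assume "f \<in> {f \<in> HpE p E. f \<noteq> (\<lambda>_. 0)}"
  then have fH: "f \<in> HpE p E" by auto
  have S: "sup_normE E f \<le> ereal C * Lp_normE p E f"
    unfolding sup_normE_def
    by (rule SUP_least, rule pointwise_bound[OF fH assms(4,5,6)])
  have S0: "0 \<le> sup_normE E f"
    unfolding sup_normE_def by (rule order.trans[OF _ SUP_upper[of 0]]) auto
  have L0: "0 \<le> Lp_normE p E f"
    by (simp add: Lp_normE_def Let_def)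
  show "sup_normE E f / Lp_normE p E f \<le> ereal C"
  proof (cases "Lp_normE p E f = \<infinity>")
    case True then show ?thesis using assms(5) by simp
  next
    case False
    show ?thesis
    proof (cases "Lp_normE p E f = 0")
      case True
      then have "sup_normE E f = 0" using S S0 by simp
      then show ?thesis using True assms(5) by (simp add: divide_ereal_def)
    next
      case False2: False
      then have "0 < Lp_normE p E f" using L0 by simp
      then show ?thesis using S False
        by (simp add: ereal_divide_le_pos mult.commute)
    qed
  qed
qed

end
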